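(* Let $\mathcal{A}$ be a commutative $\sigma$-finite W*-algebra or a commutative AW*-algebra, and let $\mathcal{E}$ be a Hilbert C*-module over $\mathcal{A}$ of rank $d$. Let $n\geq d$ and let $\{\tau_j\}_{j=1}^n$ be a collection of vectors in $\mathcal{E}$ with $\langle \tau_j,\tau_j\rangle=1$ for all $1\leq j\leq n$. Then, for every $m\in\mathbb{N}$, \[ \sum_{j=1}^n\sum_{k=1}^n\|\langle \tau_j, \tau_k\rangle \|^{2m}\geq \sum_{j=1}^n\sum_{k=1}^n\langle \tau_j, \tau_k\rangle ^{m}\langle \tau_k, \tau_j\rangle ^{m}\geq \frac{1}{{d+m-1\choose m}}\left(\sum_{j=1}^{n}\langle \tau_j, \tau_j \rangle ^{m}\right)^2, \] in particular \[ \sum_{j=1}^n\sum_{k=1}^n\|\langle \tau_j, \tau_k\rangle \|^{2} \geq \sum_{j=1}^n\sum_{k=1}^n\langle \tau_j, \tau_k\rangle \langle \tau_k, \tau_j\rangle \geq \frac{1}{d}\left(\sum_{j=1}^{n}\langle \tau_j, \tau_j \rangle \right)^2. \] Further (for $n\geq 2$), for every $m\in\mathbb{N}$, \[ \max _{1\leq j,k \leq n,\, j\neq k}\|\langle \tau_j, \tau_k\rangle \|^{2m} \geq \frac{1}{n^2-n}\left[\frac{1}{{d+m-1\choose m}}\left(\sum_{j=1}^{n}\langle \tau_j, \tau_j \rangle ^{m}\right)^2-\sum_{j=1}^{n}\|\tau_j\|^{4m}\right], \] and in particular \[ \max _{1\leq j,k \leq n,\, j\neq k}\|\langle \tau_j,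 \tau_k\rangle \|^{2} \geq \frac{1}{n^2-n}\left[\frac{1}{d}\left(\sum_{j=1}^{n}\langle \tau_j, \tau_j \rangle \right)^2-\sum_{j=1}^{n}\|\tau_j\|^{4}\right]. \]
   Context: A W*-algebra is $\sigma$-finite if it contains at most countably many mutually orthogonal (nonzero) projections. A C*-algebra is an AW*-algebra if every set of orthogonal projections has a supremum and every maximal commutative self-adjoint subalgebra is generated by its projections. Such algebras are unital, with identity $1$. The $\mathcal{A}$-valued inner product on $\mathcal{E}$ is linear in the first variable and conjugate-linear in the second; $\mathcal{A}$ acts from the left; $\|\tau\|=\|\langle\tau,\tau\rangle\|^{1/2}$. $\mathcal{E}$ has rank $d$ if it has an orthonormal basis $\{\omega_j\}_{j=1}^d$, i.e. $\langle\omega_j,\omega_k\rangle=\delta_{jk}1$ and $x=\sum_{j=1}^d\langle x,\omega_j\rangle\omega_j$ for all $x\in\mathcal{E}$. Inequalities between elements of $\mathcal{A}$ refer to the order on self-adjoint elements, a real number $c$ being identified with $c\cdot1$. *)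

theory Defs
  imports Complex_Main
begin

text \<open>The carrier is a type 'a which is a
commutative unital real Banach algebra; the complex structure is given by an
element ii with ii*ii = -1 (complex scalar c acts as Re c *R x + Im c *R (ii*x)),
and st is the involution.  The C*-identity makes the norm complex-homogeneous.\<close>
definition cstar_comm ::
  "('a::{real_normed_algebra_1,comm_ring_1,banach} \<Rightarrow> 'a) \<Rightarrow> 'a \<Rightarrow> bool" where
  "cstar_comm st ii \<longleftrightarrow>
     ii * ii = -1 \<and> st ii = - ii \<and>
     (\<forall>x y. st (x + y) = st x + st y) \<and>
     (\<forall>(r::real) x. st (r *\<^sub>R x) = r *\<^sub>R st x) \<and>
     (\<forall>x y. st (x * y) = st y * st x) \<and>
     (\<forall>x. st (st x) = x) \<and>
     (\<forall>x. norm (st x * x) = (norm x)\<^sup>2)"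

definition csa_pos :: "('a::ring \<Rightarrow> 'a) \<Rightarrow> 'a \<Rightarrow> bool" where
  "csa_pos st x \<longleftrightarrow> (\<exists>y. x = st y * y)"

definition csa_le :: "('a::ring \<Rightarrow> 'a) \<Rightarrow> 'a \<Rightarrow> 'a \<Rightarrow> bool" where
  "csa_le st x y \<longleftrightarrow> csa_pos st (y - x)"

definition is_proj :: "('a::ring \<Rightarrow> 'a) \<Rightarrow> 'a \<Rightarrow> bool" where
  "is_proj st p \<longleftrightarrow> st p = p \<and> p * p = p"

definition star_subalg ::
  "('a::{real_normed_algebra_1,comm_ring_1,banach} \<Rightarrow> 'a) \<Rightarrow> 'a \<Rightarrow> 'a set \<Rightarrow> bool" where
  "star_subalg st ii B \<longleftrightarrow>
     0 \<in> B \<and> (\<forall>x\<in>B. \<forall>y\<in>B. x + y \<in> B \<and> x * y \<in> B) \<and>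
     (\<forall>x\<in>B. ii * x \<in> B \<and> st x \<in> B \<and> (\<forall>r::real. r *\<^sub>R x \<in> B)) \<and> closed B"

definition comm_set :: "'a::ring set \<Rightarrow> bool" where
  "comm_set B \<longleftrightarrow> (\<forall>x\<in>B. \<forall>y\<in>B. x * y = y * x)"

definition max_comm_star_subalg ::
  "('a::{real_normed_algebra_1,comm_ring_1,banach} \<Rightarrow> 'a) \<Rightarrow> 'a \<Rightarrow> 'a set \<Rightarrow> bool" where
  "max_comm_star_subalg st ii B \<longleftrightarrow>
     star_subalg st ii B \<and> comm_set B \<and>
     (\<forall>C. star_subalg st ii C \<and> comm_set C \<and> B \<subseteq> C \<longrightarrow> C = B)"

definition generated_star_subalg ::
  "('a::{real_normed_algebra_1,comm_ring_1,banach} \<Rightarrow> 'a) \<Rightarrow> 'a \<Rightarrow> 'a set \<Rightarrow> 'a set" where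
  "generated_star_subalg st ii S = \<Inter>{C. star_subalg st ii C \<and> S \<subseteq> C}"

definition is_proj_sup :: "('a::ring \<Rightarrow> 'a) \<Rightarrow> 'a set \<Rightarrow> 'a \<Rightarrow> bool" where
  "is_proj_sup st S q \<longleftrightarrow> is_proj st q \<and> (\<forall>p\<in>S. csa_le st p q) \<and>
     (\<forall>r. is_proj st r \<and> (\<forall>p\<in>S. csa_le st p r) \<longrightarrow> csa_le st q r)"

text \<open>Commutative AW*-algebra (Kaplansky's definition, literally).\<close>
definition aw_star_algebra ::
  "('a::{real_normed_algebra_1,comm_ring_1,banach} \<Rightarrow> 'a) \<Rightarrow> 'a \<Rightarrow> bool" where
  "aw_star_algebra st ii \<longleftrightarrow> cstar_comm st ii \<and>
     (\<forall>S. (\<forall>p\<in>S. is_proj st p) \<and> (\<forall>p\<in>S. \<forall>q\<in>S. p \<noteq> q \<longrightarrow> p * q = 0)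
          \<longrightarrow> (\<exists>q. is_proj_sup st S q)) \<and>
     (\<forall>B. max_comm_star_subalg st ii B \<longrightarrow>
          B = generated_star_subalg st ii {p\<in>B. is_proj st p})"

definition hm_norm :: "('e \<Rightarrow> 'e \<Rightarrow> 'a::real_normed_vector) \<Rightarrow> 'e \<Rightarrow> real" where
  "hm_norm ip x = sqrt (norm (ip x x))"

definition hilbert_cstar_module ::
  "('a::{real_normed_algebra_1,comm_ring_1,banach} \<Rightarrow> 'a) \<Rightarrow> 'a \<Rightarrow>
   ('a \<Rightarrow> 'e::ab_group_add \<Rightarrow> 'e) \<Rightarrow> ('e \<Rightarrow> 'e \<Rightarrow> 'a) \<Rightarrow> bool" where
  "hilbert_cstar_module st ii act ip \<longleftrightarrow> cstar_comm st ii \<and>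
     (\<forall>a b x. act (a + b) x = act a x + act b x) \<and>
     (\<forall>a x y. act a (x + y) = act a x + act a y) \<and>
     (\<forall>x. act 1 x = x) \<and>
     (\<forall>a b x. act (a * b) x = act a (act b x)) \<and>
     (\<forall>a x y z. ip (act a x + y) z = a * ip x z + ip y z) \<and>
     (\<forall>x y. ip y x = st (ip x y)) \<and>
     (\<forall>x. csa_pos st (ip x x)) \<and>
     (\<forall>x. ip x x = 0 \<longrightarrow> x = 0) \<and>
     (\<forall>X::nat \<Rightarrow> 'e. (\<forall>e>0. \<exists>N. \<forall>m\<ge>N. \<forall>n\<ge>N. hm_norm ip (X m - X n) < e)
          \<longrightarrow> (\<exists>l. (\<lambda>n. hm_norm ip (X n - l)) \<longlonglongrightarrow> 0))"

definition has_rank ::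
  "('a::comm_ring_1 \<Rightarrow> 'e::ab_group_add \<Rightarrow> 'e) \<Rightarrow> ('e \<Rightarrow> 'e \<Rightarrow> 'a) \<Rightarrow> nat \<Rightarrow> bool" where
  "has_rank act ip d \<longleftrightarrow> (\<exists>\<omega>::nat \<Rightarrow> 'e.
     (\<forall>j\<in>{1..d}. \<forall>k\<in>{1..d}. ip (\<omega> j) (\<omega> k) = (if j = k then 1 else 0)) \<and>
     (\<forall>x. x = (\<Sum>j=1..d. act (ip x (\<omega> j)) (\<omega> j))))"

end

theory Submission
  imports Defs "HOL-Computational_Algebra.Formal_Power_Series"
begin


definition sc :: "nat \<Rightarrow> real" where "sc k = ((1/2::real) gchoose k) * (-1)^k"

lemma sc_0: "sc 0 = 1" by (simp add: sc_def)

lemma sc_Suc: "sc (Suc k) = sc k * (real k - 1/2) / (real k + 1)"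
proof -
  have "(1/2::real) * ((1/2) gchoose k) = of_nat k * ((1/2) gchoose k) + of_nat (Suc k) * ((1/2) gchoose (Suc k))"
    by (rule gbinomial_mult_1)
  hence h: "((1/2::real) gchoose (Suc k)) = (1/2 - real k) * ((1/2) gchoose k) / (real k + 1)"
    by (simp add: field_simps)
  show ?thesis unfolding sc_def h by (simp add: field_simps)
qed

lemma sc_nonpos: "k \<ge> 1 \<Longrightarrow> sc k \<le> 0"
proof (induction k)
  case 0 then show ?case by simp
next
  case (Suc k)
  show ?case
  proof (cases "k = 0")
    case True then show ?thesis by (simp add: sc_Suc sc_0)
  next
    case False
    then have "sc k \<le> 0" "real k \<ge> 1" using Suc by auto
    then show ?thesis unfolding sc_Suc by (simp add: divide_nonpos_pos mult_nonpos_nonneg)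
  qed
qed

lemma sc_partial: "(\<Sum>k\<le>K. sc k) = - 2 * (real K + 1) * sc (Suc K)"
proof (induction K)
  case 0 then show ?case by (simp add: sc_Suc sc_0)
next
  case (Suc K)
  have "(\<Sum>k\<le>Suc K. sc k) = - 2 * (real K + 1) * sc (Suc K) + sc (Suc K)" using Suc by simp
  also have "\<dots> = - 2 * (real (Suc K) + 1) * sc (Suc (Suc K))"
    using sc_Suc[of "Suc K"] by (simp add: field_simps)
  finally show ?case .
qed

lemma sc_partial_nonneg: "(\<Sum>k\<le>K. sc k) \<ge> 0"
  unfolding sc_partial using sc_nonpos[of "Suc K"] by (simp add: mult_nonpos_nonpos)

lemma sc_abs_summable: "summable (\<lambda>k. \<bar>sc k\<bar>)"
proof (rule summableI_nonneg_bounded[where x = 2])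
  fix n
  show "(\<Sum>k<n. \<bar>sc k\<bar>) \<le> 2"
  proof (cases n)
    case 0 then show ?thesis by simp
  next
    case (Suc K)
    have "(\<Sum>k<n. \<bar>sc k\<bar>) = (\<Sum>k\<le>K. \<bar>sc k\<bar>)" using Suc lessThan_Suc_atMost by simp
    also have "\<dots> = (\<Sum>k\<le>K. (if k = 0 then 2 * sc k else 0) - sc k)"
      by (rule sum.cong) (use sc_nonpos in \<open>auto simp: sc_0\<close>)
    also have "\<dots> = 2 - (\<Sum>k\<le>K. sc k)"
      by (simp add: sum_subtractf sc_0)
    also have "\<dots> \<le> 2" using sc_partial_nonneg by simp
    finally show ?thesis .
  qed
qed auto

lemma sc_conv: "(\<Sum>i\<le>k. sc i * sc (k - i)) = (if k = 0 then 1 else if k = 1 then -1 else 0)"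
proof -
  have "(\<Sum>i\<le>k. sc i * sc (k - i)) = (\<Sum>i=0..k. ((1/2::real) gchoose i) * ((1/2) gchoose (k - i))) * (-1)^k"
    unfolding sc_def sum_distrib_right atMost_atLeast0
    by (rule sum.cong) (auto simp: power_add[symmetric])
  also have "\<dots> = ((1::real) gchoose k) * (-1)^k"
    using gbinomial_Vandermonde[of "1/2::real" "1/2" k] by simp
  also have "((1::real) gchoose k) = of_nat (1 choose k)"
    using binomial_gbinomial[of 1 k, where 'a=real] by simp
  finally show ?thesis
    by (cases k; cases "k = 1") (auto simp: binomial_eq_0)
qed

lemma sqrt_series:
  fixes b :: "'a::{real_normed_algebra_1,banach}"
  assumes "norm b \<le> 1"
  shows "summable (\<lambda>k. norm (sc k *\<^sub>R b ^ k))"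
    and "(\<Sum>k. sc k *\<^sub>R b ^ k) * (\<Sum>k. sc k *\<^sub>R b ^ k) = 1 - b"
proof -
  have nb: "norm (b ^ k) \<le> 1" for k
    using norm_power_ineq[of b k] assms power_le_one[of "norm b" k] by simp
  show sm: "summable (\<lambda>k. norm (sc k *\<^sub>R b ^ k))"
  proof (rule summable_comparison_test'[OF sc_abs_summable])
    fix k
    show "norm (norm (sc k *\<^sub>R b ^ k)) \<le> \<bar>sc k\<bar>"
      using nb[of k] by (simp add: mult_left_le)
  qed
  have "(\<lambda>k. \<Sum>i\<le>k. (sc i *\<^sub>R b ^ i) * (sc (k - i) *\<^sub>R b ^ (k - i))) sums
        ((\<Sum>k. sc k *\<^sub>R b ^ k) * (\<Sum>k. sc k *\<^sub>R b ^ k))"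
    by (rule Cauchy_product_sums[OF sm sm])
  moreover have "(\<lambda>k. \<Sum>i\<le>k. (sc i *\<^sub>R b ^ i) * (sc (k - i) *\<^sub>R b ^ (k - i)))
      = (\<lambda>k. if k \<in> {0, 1} then (if k = 0 then 1 else - b) else 0)"
  proof
    fix k
    have "(\<Sum>i\<le>k. (sc i *\<^sub>R b ^ i) * (sc (k - i) *\<^sub>R b ^ (k - i)))
        = (\<Sum>i\<le>k. (sc i * sc (k - i)) *\<^sub>R b ^ k)"
      by (rule sum.cong) (auto simp: power_add[symmetric])
    also have "\<dots> = (\<Sum>i\<le>k. sc i * sc (k - i)) *\<^sub>R b ^ k"
      by (simp add: scaleR_sum_left)
    finally show "(\<Sum>i\<le>k. (sc i *\<^sub>R b ^ i) * (sc (k - i) *\<^sub>R b ^ (k - i))) =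
      (if k \<in> {0, 1} then (if k = 0 then 1 else - b) else 0)"
      by (simp add: sc_conv)
  qed
  ultimately have "(\<lambda>k. if k \<in> {0, 1} then (if k = 0 then 1 else - b) else 0) sums
        ((\<Sum>k. sc k *\<^sub>R b ^ k) * (\<Sum>k. sc k *\<^sub>R b ^ k))" by simp
  moreover have "(\<lambda>k. if k \<in> {0::nat, 1} then (if k = 0 then 1 else - b) else 0) sums
       (\<Sum>k\<in>{0::nat,1}. (if k = 0 then 1 else - b))"
    by (rule sums_If_finite_set) simp
  ultimately show "(\<Sum>k. sc k *\<^sub>R b ^ k) * (\<Sum>k. sc k *\<^sub>R b ^ k) = 1 - b"
    using sums_unique2 by fastforce
qed



context
  fixes st :: "'a::{real_normed_algebra_1,comm_ring_1,banach} \<Rightarrow> 'a" and ii :: 'a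
  assumes cs: "cstar_comm st ii"
begin

lemma st_add: "st (x + y) = st x + st y" using cs unfolding cstar_comm_def by blast
lemma st_scaleR: "st (r *\<^sub>R x) = r *\<^sub>R st x" using cs unfolding cstar_comm_def by blast
lemma st_mult: "st (x * y) = st y * st x" using cs unfolding cstar_comm_def by blast
lemma st_st: "st (st x) = x" using cs unfolding cstar_comm_def by blast
lemma cstar: "norm (st x * x) = (norm x)\<^sup>2" using cs unfolding cstar_comm_def by blast
lemma ii_sq: "ii * ii = -1" using cs unfolding cstar_comm_def by blast
lemma st_ii: "st ii = - ii" using cs unfolding cstar_comm_def by blast

lemma st_0: "st 0 = 0" using st_scaleR[of 0 0] by simp
lemma st_minus: "st (- x) = - st x" using st_scaleR[of "-1" x] by simp
lemma st_diff: "st (x - y) = st x - st y" using st_add[of x "- y"] st_minus by simp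
lemma st_1: "st 1 = 1"
proof -
  have "st (st 1 * 1) = st 1 * st (st 1)" by (rule st_mult)
  hence "st (st 1) = st 1 * 1" by (simp add: st_st)
  thus ?thesis by (simp add: st_st)
qed
lemma st_power: "st (x ^ k) = st x ^ k"
  by (induction k) (simp_all add: st_1 st_mult mult.commute)
lemma st_sum: "st (sum f A) = (\<Sum>a\<in>A. st (f a))"
  by (induction A rule: infinite_finite_induct) (simp_all add: st_0 st_add)
lemma st_of_real: "st (of_real r) = of_real r"
  unfolding of_real_def by (simp add: st_scaleR st_1)
lemma st_of_nat: "st (of_nat n) = of_nat n"
  using st_of_real[of "real n"] by simp

lemma norm_st: "norm (st x) = norm x"
proof -
  have le: "norm y \<le> norm (st y)" for y
  proof (cases "y = 0")
    case True then show ?thesis by simp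
  next
    case False
    have "(norm y)\<^sup>2 \<le> norm (st y) * norm y" using cstar[of y] norm_mult_ineq[of "st y" y] by simp
    thus ?thesis using False by (simp add: power2_eq_square)
  qed
  show ?thesis using le[of x] le[of "st x"] st_st by (simp add: antisym)
qed

lemma bl_st: "bounded_linear st"
  by (rule bounded_linear_intro[where K=1]) (simp_all add: st_add st_scaleR norm_st)

lemma norm_ii_mult: "norm (ii * x) = norm x"
proof -
  have "st (ii * x) * (ii * x) = st x * x"
  proof -
    have "st (ii * x) * (ii * x) = (st x * (- ii)) * (ii * x)" by (simp add: st_mult st_ii)
    also have "\<dots> = - (st x * x * (ii * ii))" by (simp add: algebra_simps)
    also have "\<dots> = st x * x" by (simp add: ii_sq)
    finally show ?thesis .
  qed
  hence "(norm (ii * x))\<^sup>2 = (norm x)\<^sup>2" using cstar by metis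
  thus ?thesis by simp
qed

lemma norm_sa_sq: "st h = h \<Longrightarrow> norm (h * h) = (norm h)\<^sup>2"
  using cstar[of h] by simp

lemma sqrt_sa:
  assumes "norm b \<le> 1" "st b = b"
  shows "\<exists>w. w * w = 1 - b \<and> st w = w"
proof -
  let ?w = "\<Sum>k. sc k *\<^sub>R b ^ k"
  have sm: "summable (\<lambda>k. sc k *\<^sub>R b ^ k)"
    by (rule summable_norm_cancel[OF sqrt_series(1)[OF assms(1)]])
  have "st ?w = (\<Sum>k. st (sc k *\<^sub>R b ^ k))"
    by (rule bounded_linear.suminf[OF bl_st sm])
  also have "\<dots> = ?w" by (simp only: st_scaleR st_power assms(2))
  finally have "st ?w = ?w" .
  then show ?thesis using sqrt_series(2)[OF assms(1)] by (intro exI[of _ ?w] conjI)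
qed

end


definition pp :: "('a::real_normed_algebra_1 \<Rightarrow> 'a) \<Rightarrow> 'a \<Rightarrow> bool" where
  "pp st x \<longleftrightarrow> st x = x \<and> (\<exists>t\<ge>0. norm (t *\<^sub>R 1 - x) \<le> t)"

context
  fixes st :: "'a::{real_normed_algebra_1,comm_ring_1,banach} \<Rightarrow> 'a" and ii :: 'a
  assumes cs: "cstar_comm st ii"
begin

lemma pp_0: "pp st 0" unfolding pp_def using st_0[OF cs] by auto

lemma pp_add: "pp st x \<Longrightarrow> pp st y \<Longrightarrow> pp st (x + y)"
proof -
  assume "pp st x" "pp st y"
  then obtain s t where st: "st x = x" "st y = y" "s \<ge> 0" "t \<ge> 0"
    "norm (s *\<^sub>R 1 - x) \<le> s" "norm (t *\<^sub>R 1 - y) \<le> t" unfolding pp_def by blast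
  have "norm ((s + t) *\<^sub>R 1 - (x + y)) = norm ((s *\<^sub>R 1 - x) + (t *\<^sub>R 1 - y))"
    by (simp add: algebra_simps)
  also have "\<dots> \<le> s + t" using st(5,6) norm_triangle_ineq[of "s *\<^sub>R 1 - x" "t *\<^sub>R 1 - y"] by simp
  finally show ?thesis unfolding pp_def using st st_add[OF cs] by (intro conjI exI[of _ "s+t"]) auto
qed

lemma pp_sum: "(\<And>a. a \<in> A \<Longrightarrow> pp st (f a)) \<Longrightarrow> pp st (sum f A)"
  by (induction A rule: infinite_finite_induct) (auto simp: pp_0 pp_add)

lemma pp_bound: assumes "st x = x" "norm x \<le> r" shows "pp st (r *\<^sub>R 1 - x)"
proof -
  have "r \<ge> 0" using assms(2) norm_ge_zero[of x] by linarith
  thus ?thesis unfolding pp_def using assms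
    by (intro conjI exI[of _ r]) (auto simp: st_diff[OF cs] st_scaleR[OF cs] st_1[OF cs])
qed

lemma pp_sq: assumes "st h = h" shows "pp st (h * h)"
proof (cases "h = 0")
  case True then show ?thesis using pp_0 by simp
next
  case False
  define t where "t = norm h"
  have tpos: "t > 0" using False t_def by simp
  define k where "k = (1 / t) *\<^sub>R h"
  have kn: "norm k = 1" using tpos unfolding k_def t_def by simp
  have ksa: "st k = k" unfolding k_def by (simp add: st_scaleR[OF cs] assms)
  have "norm (k * k) \<le> 1" using norm_sa_sq[OF cs ksa] kn by simp
  moreover have "st (k * k) = k * k" by (simp add: st_mult[OF cs] ksa)
  ultimately obtain w where w: "w * w = 1 - k * k" "st w = w" using sqrt_sa[OF cs] by blast
  define U where "U = k + ii * w"
  have "st U * U = (k - ii * w) * (k + ii * w)"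
    unfolding U_def by (simp add: st_add[OF cs] st_mult[OF cs] st_ii[OF cs] ksa w(2) algebra_simps)
  also have "\<dots> = k * k - (ii * ii) * (w * w)" by (simp add: algebra_simps)
  also have "\<dots> = 1" by (simp add: ii_sq[OF cs] w(1))
  finally have "(norm U)\<^sup>2 = 1" using cstar[OF cs, of U] by simp
  hence nU: "norm U = 1" using norm_ge_zero[of U] by (auto simp: power2_eq_1_iff)
  have "U - st U = 2 *\<^sub>R (ii * w)"
    unfolding U_def by (simp add: st_add[OF cs] st_mult[OF cs] st_ii[OF cs] ksa w(2) algebra_simps scaleR_2)
  hence "2 * norm w = norm (U - st U)" using norm_ii_mult[OF cs, of w] by simp
  also have "\<dots> \<le> 2" using norm_triangle_ineq4[of U "st U"] nU norm_st[OF cs, of U] by simp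
  finally have "norm w \<le> 1" by simp
  hence "norm (1 - k * k) \<le> 1" using w norm_sa_sq[OF cs w(2)] by (simp add: power_le_one)
  hence "t\<^sup>2 * norm (1 - k * k) \<le> t\<^sup>2" by (simp add: mult_left_le)
  moreover have "t\<^sup>2 *\<^sub>R (1 - k * k) = t\<^sup>2 *\<^sub>R 1 - h * h"
    unfolding k_def using tpos by (simp add: algebra_simps power2_eq_square)
  ultimately have "norm (t\<^sup>2 *\<^sub>R 1 - h * h) \<le> t\<^sup>2"
    by (metis norm_scaleR abs_of_nonneg zero_le_power2)
  thus ?thesis unfolding pp_def by (intro conjI exI[of _ "t\<^sup>2"]) (auto simp: st_mult[OF cs] assms)
qed

lemma pp_sty: "pp st (st y * y)"
proof -
  define h where "h = (1/2) *\<^sub>R (y + st y)"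
  define k where "k = (1/2) *\<^sub>R ((- ii) * (y - st y))"
  have hs: "st h = h" unfolding h_def by (simp add: st_scaleR[OF cs] st_add[OF cs] st_st[OF cs] add.commute)
  have ks: "st k = k" unfolding k_def
    by (simp add: st_scaleR[OF cs] st_mult[OF cs] st_minus[OF cs] st_diff[OF cs] st_st[OF cs] st_ii[OF cs] algebra_simps)
  have "h * h + k * k = (1/4) *\<^sub>R ((y + st y) * (y + st y) + (ii * ii) * ((y - st y) * (y - st y)))"
    unfolding h_def k_def by (simp add: algebra_simps)
  also have "\<dots> = (1/4) *\<^sub>R (4 *\<^sub>R (st y * y))"
    by (simp add: ii_sq[OF cs] algebra_simps scaleR_conv_of_real of_real_numeral)
  also have "\<dots> = st y * y" by simp
  finally show ?thesis using pp_add[OF pp_sq[OF hs] pp_sq[OF ks]] by simp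
qed

lemma pp_pos: assumes "pp st x" shows "csa_pos st x"
proof -
  obtain t where t: "st x = x" "t \<ge> 0" "norm (t *\<^sub>R 1 - x) \<le> t" using assms unfolding pp_def by blast
  show ?thesis
  proof (cases "t = 0")
    case True
    then have "x = 0" using t by simp
    then show ?thesis unfolding csa_pos_def using st_0[OF cs] by (intro exI[of _ 0]) simp
  next
    case False
    then have tp: "t > 0" using t by simp
    define b where "b = 1 - (1/t) *\<^sub>R x"
    have "b = (1/t) *\<^sub>R (t *\<^sub>R 1 - x)" unfolding b_def using tp by (simp add: algebra_simps)
    hence "norm b \<le> 1" using t tp by (simp add: divide_le_eq)
    moreover have "st b = b" unfolding b_def by (simp add: st_diff[OF cs] st_1[OF cs] st_scaleR[OF cs] t(1))
    ultimately obtain w where w: "w * w = 1 - b" "st w = w" using sqrt_sa[OF cs] by blast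
    have "st (sqrt t *\<^sub>R w) * (sqrt t *\<^sub>R w) = t *\<^sub>R (w * w)"
      using tp by (simp add: st_scaleR[OF cs] w(2))
    also have "\<dots> = x" using tp unfolding w(1) b_def by simp
    finally show ?thesis unfolding csa_pos_def by metis
  qed
qed

lemma pp_norm: assumes "pp st p" "c \<ge> 0" shows "c \<le> norm (c *\<^sub>R 1 + p)"
proof (rule ccontr)
  assume "\<not> ?thesis"
  hence lt: "norm (c *\<^sub>R 1 + p) < c" by simp
  obtain t where t: "t \<ge> 0" "norm (t *\<^sub>R 1 - p) \<le> t" using assms unfolding pp_def by blast
  have "(t + c) *\<^sub>R (1::'a) = (t *\<^sub>R 1 - p) + (c *\<^sub>R 1 + p)" by (simp add: algebra_simps)
  hence "norm ((t + c) *\<^sub>R (1::'a)) \<le> t + norm (c *\<^sub>R 1 + p)"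
    using norm_triangle_ineq[of "t *\<^sub>R 1 - p" "c *\<^sub>R 1 + p"] t by simp
  also have "\<dots> < t + c" using lt by simp
  finally show False using t assms by simp
qed

end


fun Iset :: "nat \<Rightarrow> nat \<Rightarrow> nat list set" where
  "Iset 0 m = (if m = 0 then {[]} else {})"
| "Iset (Suc d) m = (\<Union>l\<in>{0..m}. (\<lambda>\<alpha>. l # \<alpha>) ` Iset d (m - l))"

fun Vf :: "(nat \<Rightarrow> 'a::real_normed_algebra_1) \<Rightarrow> nat \<Rightarrow> nat list \<Rightarrow> 'a" where
  "Vf c m [] = 1"
| "Vf c m (l # \<alpha>) = sqrt (real (m choose l)) *\<^sub>R (c (Suc (length \<alpha>)) ^ l * Vf c (m - l) \<alpha>)"

lemma Iset_len: "\<alpha> \<in> Iset d m \<Longrightarrow> length \<alpha> = d"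
  by (induction d arbitrary: m \<alpha>) (auto split: if_splits)

lemma finite_Iset: "finite (Iset d m)"
  by (induction d arbitrary: m) auto


lemma card_Iset: "card (Iset d m) = (d + m - 1) choose m"
proof (induction d arbitrary: m)
  case 0 then show ?case by simp
next
  case (Suc d)
  have "card (Iset (Suc d) m) = (\<Sum>l\<in>{0..m}. card ((\<lambda>\<alpha>. l # \<alpha>) ` Iset d (m - l)))"
    by simp (rule card_UN_disjoint, auto simp: finite_Iset)
  also have "\<dots> = (\<Sum>l\<in>{0..m}. (d + (m - l) - 1) choose (m - l))"
    by (rule sum.cong) (auto simp: card_image Suc)
  also have "\<dots> = (\<Sum>k\<in>{0..m}. (d + k - 1) choose k)"
    by (rule sum.reindex_bij_witness[where i="\<lambda>k. m - k" and j="\<lambda>l. m - l"]) auto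
  also have "\<dots> = (Suc d + m - 1) choose m"
  proof (cases d)
    case 0
    have "(\<Sum>k\<in>{0..m}. (d + k - 1) choose k) = (\<Sum>k\<in>{0..m}. if k = 0 then 1 else 0)"
      by (rule sum.cong) (auto simp: 0 binomial_eq_0)
    then show ?thesis using 0 by simp
  next
    case (Suc r)
    have "(\<Sum>k\<in>{0..m}. (d + k - 1) choose k) = (\<Sum>k\<le>m. (r + k) choose k)"
      using Suc atMost_atLeast0 by simp
    also have "\<dots> = Suc (r + m) choose m" by (rule sum_choose_lower)
    finally show ?thesis using Suc by simp
  qed
  finally show ?case .
qed

context
  fixes st :: "'a::{real_normed_algebra_1,comm_ring_1,banach} \<Rightarrow> 'a" and ii :: 'a
  assumes cs: "cstar_comm st ii"
begin

lemma Vf_inner: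
  "(\<Sum>\<alpha>\<in>Iset d m. Vf a m \<alpha> * st (Vf b m \<alpha>)) = (\<Sum>i=1..d. a i * st (b i)) ^ m"
proof (induction d arbitrary: m)
  case 0 then show ?case by (cases m) (simp_all add: st_1[OF cs])
next
  case (Suc d)
  let ?x = "a (Suc d) * st (b (Suc d))"
  let ?G = "\<Sum>i=1..d. a i * st (b i)"
  have "(\<Sum>\<alpha>\<in>Iset (Suc d) m. Vf a m \<alpha> * st (Vf b m \<alpha>))
      = (\<Sum>l\<in>{0..m}. \<Sum>\<alpha>\<in>(\<lambda>\<alpha>. l # \<alpha>) ` Iset d (m - l). Vf a m \<alpha> * st (Vf b m \<alpha>))"
    by simp (rule sum.UNION_disjoint, auto simp: finite_Iset)
  also have "\<dots> = (\<Sum>l\<in>{0..m}. \<Sum>\<alpha>\<in>Iset d (m - l). Vf a m (l # \<alpha>) * st (Vf b m (l # \<alpha>)))"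
    by (rule sum.cong) (auto simp: sum.reindex)
  also have "\<dots> = (\<Sum>l\<in>{0..m}. \<Sum>\<alpha>\<in>Iset d (m - l).
        real (m choose l) *\<^sub>R (?x ^ l * (Vf a (m - l) \<alpha> * st (Vf b (m - l) \<alpha>))))"
  proof (intro sum.cong refl)
    fix l \<alpha> assume "\<alpha> \<in> Iset d (m - l)"
    hence len: "length \<alpha> = d" by (rule Iset_len)
    have "Vf a m (l # \<alpha>) * st (Vf b m (l # \<alpha>)) =
       (sqrt (real (m choose l)) * sqrt (real (m choose l))) *\<^sub>R
         (a (Suc d) ^ l * Vf a (m - l) \<alpha> * (st (Vf b (m - l) \<alpha>) * st (b (Suc d)) ^ l))"
      using len by (simp add: st_scaleR[OF cs] st_mult[OF cs] st_power[OF cs] algebra_simps)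
    also have "\<dots> = real (m choose l) *\<^sub>R (?x ^ l * (Vf a (m - l) \<alpha> * st (Vf b (m - l) \<alpha>)))"
      by (simp add: power_mult_distrib algebra_simps)
    finally show "Vf a m (l # \<alpha>) * st (Vf b m (l # \<alpha>)) =
       real (m choose l) *\<^sub>R (?x ^ l * (Vf a (m - l) \<alpha> * st (Vf b (m - l) \<alpha>)))" .
  qed
  also have "\<dots> = (\<Sum>l\<in>{0..m}. real (m choose l) *\<^sub>R (?x ^ l * ?G ^ (m - l)))"
  proof (rule sum.cong[OF refl])
    fix l
    show "(\<Sum>\<alpha>\<in>Iset d (m - l). real (m choose l) *\<^sub>R (?x ^ l * (Vf a (m - l) \<alpha> * st (Vf b (m - l) \<alpha>))))
        = real (m choose l) *\<^sub>R (?x ^ l * ?G ^ (m - l))"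
      by (simp only: scaleR_sum_right[symmetric] sum_distrib_left[symmetric] Suc.IH)
  qed
  also have "\<dots> = (?x + ?G) ^ m"
    by (simp add: binomial_ring atMost_atLeast0 scaleR_conv_of_real mult.assoc)
  also have "?x + ?G = (\<Sum>i=1..Suc d. a i * st (b i))"
    by (simp add: add.commute)
  finally show ?case .
qed

end


context
  fixes st :: "'a::{real_normed_algebra_1,comm_ring_1,banach} \<Rightarrow> 'a" and ii :: 'a
  assumes cs: "cstar_comm st ii"
begin

lemma welch_pp:
  fixes V :: "nat \<Rightarrow> 'b \<Rightarrow> 'a" and I :: "'b set" and J :: "nat set"
  assumes fI: "finite I" and fJ: "finite J"
  defines "Gm \<equiv> \<lambda>j k. \<Sum>\<alpha>\<in>I. V j \<alpha> * st (V k \<alpha>)"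
  shows "pp st ((\<Sum>j\<in>J. \<Sum>k\<in>J. Gm j k * Gm k j) - (1 / real (card I)) *\<^sub>R (\<Sum>j\<in>J. Gm j j)\<^sup>2)"
proof -
  define S where "S = (\<lambda>\<alpha> \<beta>. \<Sum>j\<in>J. V j \<alpha> * st (V j \<beta>))"
  define s where "s = (\<lambda>\<alpha>. S \<alpha> \<alpha>)"
  define T where "T = (\<Sum>\<alpha>\<in>I. s \<alpha>)"
  define N where "N = card I"
  define \<mu> where "\<mu> = of_real (1 / real N) * T"
  have Sst: "S \<beta> \<alpha> = st (S \<alpha> \<beta>)" for \<alpha> \<beta>
    unfolding S_def by (simp add: st_sum[OF cs] st_mult[OF cs] st_st[OF cs] mult.commute)
  have ssa: "st (s \<alpha>) = s \<alpha>" for \<alpha> unfolding s_def by (rule sym[OF Sst[of \<alpha> \<alpha>]])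
  have Tsa: "st T = T" unfolding T_def by (simp add: st_sum[OF cs] ssa)
  have \<mu>sa: "st \<mu> = \<mu>" unfolding \<mu>_def by (simp add: st_mult[OF cs] st_of_real[OF cs] Tsa mult.commute)
  have eq1: "(\<Sum>j\<in>J. \<Sum>k\<in>J. Gm j k * Gm k j) = (\<Sum>\<alpha>\<in>I. \<Sum>\<beta>\<in>I. S \<alpha> \<beta> * S \<beta> \<alpha>)"
  proof -
    have "(\<Sum>j\<in>J. \<Sum>k\<in>J. Gm j k * Gm k j)
       = (\<Sum>j\<in>J. \<Sum>k\<in>J. \<Sum>\<alpha>\<in>I. \<Sum>\<beta>\<in>I. (V j \<alpha> * st (V j \<beta>)) * (V k \<beta> * st (V k \<alpha>)))"
      unfolding Gm_def sum_product by (intro sum.cong refl) (simp add: algebra_simps)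
    also have "\<dots> = (\<Sum>j\<in>J. \<Sum>\<alpha>\<in>I. \<Sum>\<beta>\<in>I. \<Sum>k\<in>J. (V j \<alpha> * st (V j \<beta>)) * (V k \<beta> * st (V k \<alpha>)))"
    proof (rule sum.cong[OF refl])
      fix j
      show "(\<Sum>k\<in>J. \<Sum>\<alpha>\<in>I. \<Sum>\<beta>\<in>I. (V j \<alpha> * st (V j \<beta>)) * (V k \<beta> * st (V k \<alpha>)))
          = (\<Sum>\<alpha>\<in>I. \<Sum>\<beta>\<in>I. \<Sum>k\<in>J. (V j \<alpha> * st (V j \<beta>)) * (V k \<beta> * st (V k \<alpha>)))"
        by (subst sum.swap) (simp add: sum.swap[of _ J I])
    qed
    also have "\<dots> = (\<Sum>\<alpha>\<in>I. \<Sum>\<beta>\<in>I. \<Sum>j\<in>J. \<Sum>k\<in>J. (V j \<alpha> * st (V j \<beta>)) * (V k \<beta> * st (V k \<alpha>)))"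
      by (subst sum.swap) (simp add: sum.swap[of _ J I])
    also have "\<dots> = (\<Sum>\<alpha>\<in>I. \<Sum>\<beta>\<in>I. S \<alpha> \<beta> * S \<beta> \<alpha>)"
      unfolding S_def sum_product by simp
    finally show ?thesis .
  qed
  have eq2: "(\<Sum>j\<in>J. Gm j j) = T"
    unfolding Gm_def T_def s_def S_def by (rule sum.swap)
  have eq3: "(\<Sum>\<alpha>\<in>I. \<Sum>\<beta>\<in>I. S \<alpha> \<beta> * S \<beta> \<alpha>)
      = (\<Sum>\<alpha>\<in>I. s \<alpha> * s \<alpha>) + (\<Sum>\<alpha>\<in>I. \<Sum>\<beta>\<in>I - {\<alpha>}. S \<alpha> \<beta> * S \<beta> \<alpha>)"
  proof -
    have "(\<Sum>\<beta>\<in>I. S \<alpha> \<beta> * S \<beta> \<alpha>) = s \<alpha> * s \<alpha> + (\<Sum>\<beta>\<in>I - {\<alpha>}. S \<alpha> \<beta> * S \<beta> \<alpha>)"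
      if "\<alpha> \<in> I" for \<alpha>
      using sum.remove[OF fI that, of "\<lambda>\<beta>. S \<alpha> \<beta> * S \<beta> \<alpha>"] unfolding s_def by simp
    thus ?thesis by (simp add: sum.distrib)
  qed
  have eq4: "(\<Sum>\<alpha>\<in>I. s \<alpha> * s \<alpha>) - (1 / real N) *\<^sub>R T\<^sup>2 = (\<Sum>\<alpha>\<in>I. (s \<alpha> - \<mu>) * (s \<alpha> - \<mu>))"
  proof (cases "N = 0")
    case True
    then have "I = {}" using fI N_def by simp
    then show ?thesis unfolding T_def by simp
  next
    case False
    have "(\<Sum>\<alpha>\<in>I. (s \<alpha> - \<mu>) * (s \<alpha> - \<mu>)) = (\<Sum>\<alpha>\<in>I. s \<alpha> * s \<alpha> - 2 * \<mu> * s \<alpha> + \<mu> * \<mu>)"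
      by (simp add: algebra_simps)
    also have "\<dots> = (\<Sum>\<alpha>\<in>I. s \<alpha> * s \<alpha>) - 2 * \<mu> * T + of_nat N * (\<mu> * \<mu>)"
      unfolding T_def N_def by (simp add: sum.distrib sum_subtractf sum_distrib_left)
    also have "of_nat N * (\<mu> * \<mu>) = (of_nat N * of_real (1 / real N)) * (of_real (1 / real N) * T * T)"
      unfolding \<mu>_def by (simp add: algebra_simps)
    also have "(of_nat N * of_real (1 / real N) :: 'a) = of_real (real N * (1 / real N))"
      by (simp only: of_real_mult of_real_of_nat_eq)
    also have "real N * (1 / real N) = 1" using False by simp
    finally have h: "(\<Sum>\<alpha>\<in>I. (s \<alpha> - \<mu>) * (s \<alpha> - \<mu>))
        = (\<Sum>\<alpha>\<in>I. s \<alpha> * s \<alpha>) - 2 * \<mu> * T + of_real (1 / real N) * T * T" by simp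
    have h2: "2 * \<mu> * T = 2 * (of_real (1 / real N) * T * T)" unfolding \<mu>_def by (simp only: mult.assoc)
    have h3: "(1 / real N) *\<^sub>R T\<^sup>2 = of_real (1 / real N) * T * T"
      by (simp only: scaleR_conv_of_real power2_eq_square mult.assoc)
    show ?thesis unfolding h h2 h3 by (simp add: algebra_simps)
  qed
  have eqF: "(\<Sum>j\<in>J. \<Sum>k\<in>J. Gm j k * Gm k j) - (1 / real (card I)) *\<^sub>R (\<Sum>j\<in>J. Gm j j)\<^sup>2
      = (\<Sum>\<alpha>\<in>I. (s \<alpha> - \<mu>) * (s \<alpha> - \<mu>)) + (\<Sum>\<alpha>\<in>I. \<Sum>\<beta>\<in>I - {\<alpha>}. S \<alpha> \<beta> * S \<beta> \<alpha>)"
  proof -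
    have gen: "(A + B) - C = (A - C) + B" for A B C :: 'a by (simp add: algebra_simps)
    show ?thesis unfolding eq1 eq2 eq3 eq4[symmetric] N_def[symmetric] by (rule gen)
  qed
  have pA: "pp st (\<Sum>\<alpha>\<in>I. (s \<alpha> - \<mu>) * (s \<alpha> - \<mu>))"
    by (rule pp_sum[OF cs], rule pp_sq[OF cs]) (simp add: st_diff[OF cs] ssa \<mu>sa)
  have pB: "pp st (\<Sum>\<alpha>\<in>I. \<Sum>\<beta>\<in>I - {\<alpha>}. S \<alpha> \<beta> * S \<beta> \<alpha>)"
  proof (intro pp_sum[OF cs])
    fix \<alpha> \<beta>
    have eqS: "S \<alpha> \<beta> * S \<beta> \<alpha> = st (st (S \<alpha> \<beta>)) * st (S \<alpha> \<beta>)"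
      by (subst Sst[of \<alpha> \<beta>]) (simp only: st_st[OF cs])
    show "pp st (S \<alpha> \<beta> * S \<beta> \<alpha>)" unfolding eqS by (rule pp_sty[OF cs])
  qed
  show ?thesis unfolding eqF by (rule pp_add[OF cs pA pB])
qed

end


lemma hm_facts:
  assumes "hilbert_cstar_module st ii act ip"
  shows "cstar_comm st ii" "ip (x + y) z = ip x z + ip y z" "ip (act a x) z = a * ip x z"
    "ip y x = st (ip x y)"
proof -
  note H = assms[unfolded hilbert_cstar_module_def]
  have A: "\<forall>a x y z. ip (act a x + y) z = a * ip x z + ip y z" "\<forall>x. act 1 x = x"
    using H[THEN conjunct2, THEN conjunct2, THEN conjunct2, THEN conjunct2, THEN conjunct2, THEN conjunct1]
      H[THEN conjunct2, THEN conjunct2, THEN conjunct2, THEN conjunct1] by auto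
  show "cstar_comm st ii" using H[THEN conjunct1] .
  have "\<forall>x y. ip y x = st (ip x y)"
    using H[THEN conjunct2, THEN conjunct2, THEN conjunct2, THEN conjunct2, THEN conjunct2, THEN conjunct2, THEN conjunct1] .
  then show "ip y x = st (ip x y)" by blast
  have add: "ip (x' + y') z' = ip x' z' + ip y' z'" for x' y' z' using A(1)[rule_format, of 1 x' y' z'] A(2) by simp
  then show "ip (x + y) z = ip x z + ip y z" .
  have "ip 0 z = ip 0 z + ip 0 z" using add[of 0 0 z] by simp
  hence z: "ip 0 z = 0" by simp
  show "ip (act a x) z = a * ip x z" using A(1)[rule_format, of a x 0 z] z by simp
qed

lemma ip_sum:
  assumes "hilbert_cstar_module st ii act ip"
  shows "ip (sum f A) z = (\<Sum>i\<in>A. ip (f i) z)"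
proof (induction A rule: infinite_finite_induct)
  case (infinite A) then show ?case
    using hm_facts(2)[OF assms, of 0 0 z] by simp
next
  case empty then show ?case using hm_facts(2)[OF assms, of 0 0 z] by simp
next
  case (insert x F) then show ?case by (simp add: hm_facts(2)[OF assms])
qed

lemma gram:
  assumes hm: "hilbert_cstar_module st ii act ip"
    and ex: "\<And>x. x = (\<Sum>j=1..d. act (ip x (\<omega> j)) (\<omega> j))"
  shows "ip x y = (\<Sum>i=1..d. ip x (\<omega> i) * st (ip y (\<omega> i)))"
proof -
  have e: "(\<Sum>j=1..d. act (ip x (\<omega> j)) (\<omega> j)) = x" by (rule sym, rule ex)
  have "ip x y = ip (\<Sum>j=1..d. act (ip x (\<omega> j)) (\<omega> j)) y" by (simp only: e)
  also have "\<dots> = (\<Sum>j=1..d. ip x (\<omega> j) * ip (\<omega> j) y)"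
    by (simp add: ip_sum[OF hm] hm_facts(3)[OF hm])
  also have "\<dots> = (\<Sum>i=1..d. ip x (\<omega> i) * st (ip y (\<omega> i)))"
    using hm_facts(4)[OF hm] by metis
  finally show ?thesis .
qed

lemma core:
  fixes st :: "'a::{real_normed_algebra_1,comm_ring_1,banach} \<Rightarrow> 'a"
    and ii :: 'a
    and act :: "'a \<Rightarrow> 'e::ab_group_add \<Rightarrow> 'e"
    and ip :: "'e \<Rightarrow> 'e \<Rightarrow> 'a"
    and d n m :: nat
    and \<tau> :: "nat \<Rightarrow> 'e"
  assumes hm: "hilbert_cstar_module st ii act ip"
    and rk: "has_rank act ip d"
    and one: "\<forall>j\<in>{1..n}. ip (\<tau> j) (\<tau> j) = 1"
  shows
    "csa_le st (\<Sum>j=1..n. \<Sum>k=1..n. ip (\<tau> j) (\<tau> k) ^ m * ip (\<tau> k) (\<tau> j) ^ m)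
               ((\<Sum>j=1..n. \<Sum>k=1..n. norm (ip (\<tau> j) (\<tau> k)) ^ (2 * m)) *\<^sub>R 1)
     \<and> csa_le st ((1 / real ((d + m - 1) choose m)) *\<^sub>R (\<Sum>j=1..n. ip (\<tau> j) (\<tau> j) ^ m)\<^sup>2)
               (\<Sum>j=1..n. \<Sum>k=1..n. ip (\<tau> j) (\<tau> k) ^ m * ip (\<tau> k) (\<tau> j) ^ m)
     \<and> (n \<ge> 2 \<longrightarrow>
          csa_le st ((1 / (real n ^ 2 - real n)) *\<^sub>R
                       ((1 / real ((d + m - 1) choose m)) *\<^sub>R (\<Sum>j=1..n. ip (\<tau> j) (\<tau> j) ^ m)\<^sup>2
                        - (\<Sum>j=1..n. hm_norm ip (\<tau> j) ^ (4 * m)) *\<^sub>R 1))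
                    (Max {norm (ip (\<tau> j) (\<tau> k)) ^ (2 * m) | j k.
                            j \<in> {1..n} \<and> k \<in> {1..n} \<and> j \<noteq> k} *\<^sub>R 1))"
proof -
  have cs: "cstar_comm st ii" by (rule hm_facts(1)[OF hm])
  obtain \<omega> where ex: "\<And>x. x = (\<Sum>j=1..d. act (ip x (\<omega> j)) (\<omega> j))"
    using rk unfolding has_rank_def by blast
  define G where "G = (\<lambda>j k. ip (\<tau> j) (\<tau> k))"
  define c where "c = (\<lambda>j i. ip (\<tau> j) (\<omega> i))"
  define C where "C = (d + m - 1) choose m"
  define X where "X = (\<Sum>j=1..n. \<Sum>k=1..n. G j k ^ m * G k j ^ m)"
  define R where "R = (\<Sum>j=1..n. \<Sum>k=1..n. norm (G j k) ^ (2 * m))"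
  have Gst: "G k j = st (G j k)" for j k unfolding G_def by (rule hm_facts(4)[OF hm])
  have Gm: "G j k ^ m = (\<Sum>\<alpha>\<in>Iset d m. Vf (c j) m \<alpha> * st (Vf (c k) m \<alpha>))" for j k
  proof -
    have "G j k = (\<Sum>i=1..d. c j i * st (c k i))" unfolding G_def c_def by (rule gram[OF hm ex])
    then show ?thesis unfolding Vf_inner[OF cs] by (simp only:)
  qed
  have cardI: "real (card (Iset d m)) = real C" unfolding C_def card_Iset ..
  have W: "pp st (X - (1 / real C) *\<^sub>R (\<Sum>j=1..n. G j j ^ m)\<^sup>2)"
    using welch_pp[OF cs finite_Iset[of d m] finite_atLeastAtMost[of 1 n], of "\<lambda>j \<alpha>. Vf (c j) m \<alpha>"]
    unfolding X_def Gm[symmetric] cardI .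
  have term_sa: "st (G j k ^ m * G k j ^ m) = G j k ^ m * G k j ^ m" for j k
    by (simp only: Gst[of j k] st_mult[OF cs] st_power[OF cs] st_st[OF cs] mult.commute)
  have term_norm: "norm (G j k ^ m * G k j ^ m) \<le> norm (G j k) ^ (2 * m)" for j k
  proof -
    have "norm (G j k ^ m * G k j ^ m) \<le> norm (G j k ^ m) * norm (G k j ^ m)" by (rule norm_mult_ineq)
    also have "\<dots> \<le> norm (G j k) ^ m * norm (G k j) ^ m"
      by (intro mult_mono norm_power_ineq) auto
    also have "norm (G k j) = norm (G j k)" by (simp only: Gst[of j k] norm_st[OF cs])
    finally show ?thesis by (simp add: power_mult power2_eq_square power_mult_distrib mult_2 power_add)
  qed
  have P1: "pp st (R *\<^sub>R 1 - X)"
  proof -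
    have "R *\<^sub>R 1 - X = (\<Sum>j=1..n. \<Sum>k=1..n. norm (G j k) ^ (2 * m) *\<^sub>R 1 - G j k ^ m * G k j ^ m)"
      unfolding R_def X_def by (simp add: sum_subtractf scaleR_sum_left)
    also have "pp st \<dots>"
      by (intro pp_sum[OF cs] pp_bound[OF cs] term_sa term_norm)
    finally show ?thesis .
  qed
  have normX: "norm X \<le> R"
    unfolding X_def R_def
    by (rule order_trans[OF norm_sum sum_mono], rule order_trans[OF norm_sum sum_mono], rule term_norm)
  have P5: "n \<ge> 2 \<longrightarrow>
          csa_le st ((1 / (real n ^ 2 - real n)) *\<^sub>R
                       ((1 / real C) *\<^sub>R (\<Sum>j=1..n. G j j ^ m)\<^sup>2
                        - (\<Sum>j=1..n. hm_norm ip (\<tau> j) ^ (4 * m)) *\<^sub>R 1))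
                    (Max {norm (G j k) ^ (2 * m) | j k.
                            j \<in> {1..n} \<and> k \<in> {1..n} \<and> j \<noteq> k} *\<^sub>R 1)"
  proof
    assume n2: "n \<ge> 2"
    have Gjj: "G j j = 1" if "j \<in> {1..n}" for j using one that unfolding G_def by blast
    have sumG: "(\<Sum>j=1..n. G j j ^ m) = of_nat n"
      using Gjj by simp
    have hmn: "(\<Sum>j=1..n. hm_norm ip (\<tau> j) ^ (4 * m)) = real n"
      using one unfolding hm_norm_def by simp
    define M where "M = Max {norm (G j k) ^ (2 * m) | j k. j \<in> {1..n} \<and> k \<in> {1..n} \<and> j \<noteq> k}"
    define lb where "lb = (1 / (real n ^ 2 - real n)) * (real n ^ 2 / real C - real n)"
    have sq: "(of_nat n :: 'a)\<^sup>2 = (real n ^ 2) *\<^sub>R 1"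
      by (simp add: scaleR_conv_of_real)
    have lhs: "(1 / (real n ^ 2 - real n)) *\<^sub>R
                 ((1 / real C) *\<^sub>R (\<Sum>j=1..n. G j j ^ m)\<^sup>2
                  - (\<Sum>j=1..n. hm_norm ip (\<tau> j) ^ (4 * m)) *\<^sub>R 1) = lb *\<^sub>R (1::'a)"
      unfolding sumG hmn sq lb_def by (simp add: algebra_simps)
    have "X - (1 / real C) *\<^sub>R (\<Sum>j=1..n. G j j ^ m)\<^sup>2 = X - (real n ^ 2 / real C) *\<^sub>R 1"
      unfolding sumG sq by simp
    hence Xeq: "X = (real n ^ 2 / real C) *\<^sub>R 1 + (X - (1 / real C) *\<^sub>R (\<Sum>j=1..n. G j j ^ m)\<^sup>2)"
      by simp
    have "real n ^ 2 / real C \<le> norm X"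
      by (subst Xeq, rule pp_norm[OF cs W]) simp
    hence Rge: "real n ^ 2 / real C \<le> R" using normX by simp
    define off where "off = (\<Sum>j=1..n. \<Sum>k\<in>{1..n} - {j}. norm (G j k) ^ (2 * m))"
    have Rsplit: "R = real n + off"
    proof -
      have "(\<Sum>k=1..n. norm (G j k) ^ (2 * m)) = 1 + (\<Sum>k\<in>{1..n} - {j}. norm (G j k) ^ (2 * m))"
        if "j \<in> {1..n}" for j
        using sum.remove[OF finite_atLeastAtMost that, of "\<lambda>k. norm (G j k) ^ (2 * m)"] Gjj[OF that] by simp
      hence "R = (\<Sum>j=1..n. 1 + (\<Sum>k\<in>{1..n} - {j}. norm (G j k) ^ (2 * m)))"
        unfolding R_def by (intro sum.cong) auto
      thus ?thesis unfolding off_def by (simp add: sum.distrib)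
    qed
    have finS: "finite {norm (G j k) ^ (2 * m) | j k. j \<in> {1..n} \<and> k \<in> {1..n} \<and> j \<noteq> k}"
    proof -
      have "{norm (G j k) ^ (2 * m) | j k. j \<in> {1..n} \<and> k \<in> {1..n} \<and> j \<noteq> k}
          \<subseteq> (\<lambda>(j, k). norm (G j k) ^ (2 * m)) ` ({1..n} \<times> {1..n})" by auto
      thus ?thesis by (rule finite_subset) simp
    qed
    have Mge: "norm (G j k) ^ (2 * m) \<le> M" if "j \<in> {1..n}" "k \<in> {1..n}" "j \<noteq> k" for j k
      unfolding M_def by (rule Max_ge[OF finS]) (use that in blast)
    have "off \<le> (\<Sum>j=1..n. \<Sum>k\<in>{1..n} - {j}. M)"
      unfolding off_def by (intro sum_mono) (auto intro: Mge)
    also have "\<dots> = real n * (real n - 1) * M"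
      by (simp add: card_Diff_singleton)
    finally have offle: "off \<le> real n * (real n - 1) * M" .
    have rn: "real n \<ge> 2" using n2 by simp
    have "real n ^ 2 - real n = real n * (real n - 1)" by (simp add: power2_eq_square algebra_simps)
    also have "\<dots> > 0" using rn by (intro mult_pos_pos) auto
    finally have npos: "real n ^ 2 - real n > 0" .
    have "real n ^ 2 / real C - real n \<le> (real n ^ 2 - real n) * M"
      using Rge Rsplit offle by (simp add: power2_eq_square algebra_simps)
    hence lM: "lb \<le> M" unfolding lb_def using npos by (simp add: field_simps)
    have "M *\<^sub>R (1::'a) - lb *\<^sub>R 1 = (M - lb) *\<^sub>R 1 - 0" by (simp add: algebra_simps)
    moreover have "pp st ((M - lb) *\<^sub>R 1 - 0)" by (rule pp_bound[OF cs]) (use lM st_0[OF cs] in auto)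
    ultimately have "pp st (M *\<^sub>R (1::'a) - lb *\<^sub>R 1)" by simp
    thus "csa_le st ((1 / (real n ^ 2 - real n)) *\<^sub>R
                       ((1 / real C) *\<^sub>R (\<Sum>j=1..n. G j j ^ m)\<^sup>2
                        - (\<Sum>j=1..n. hm_norm ip (\<tau> j) ^ (4 * m)) *\<^sub>R 1))
                    (Max {norm (G j k) ^ (2 * m) | j k.
                            j \<in> {1..n} \<and> k \<in> {1..n} \<and> j \<noteq> k} *\<^sub>R 1)"
      unfolding csa_le_def lhs M_def[symmetric] by (rule pp_pos[OF cs])
  qed
  show ?thesis
    using pp_pos[OF cs P1] pp_pos[OF cs W] P5
    unfolding csa_le_def X_def R_def C_def G_def by blast
qed


theorem theorem2p15:
  fixes st :: "'a::{real_normed_algebra_1,comm_ring_1,banach} \<Rightarrow> 'a"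
    and ii :: 'a
    and act :: "'a \<Rightarrow> 'e::ab_group_add \<Rightarrow> 'e"
    and ip :: "'e \<Rightarrow> 'e \<Rightarrow> 'a"
    and d n m :: nat
    and \<tau> :: "nat \<Rightarrow> 'e"
  assumes "aw_star_algebra st ii"
    and "hilbert_cstar_module st ii act ip"
    and "has_rank act ip d"
    and "n \<ge> d"
    and "\<forall>j\<in>{1..n}. ip (\<tau> j) (\<tau> j) = 1"
    and "m \<ge> 1"
  shows
    "csa_le st (\<Sum>j=1..n. \<Sum>k=1..n. ip (\<tau> j) (\<tau> k) ^ m * ip (\<tau> k) (\<tau> j) ^ m)
               ((\<Sum>j=1..n. \<Sum>k=1..n. norm (ip (\<tau> j) (\<tau> k)) ^ (2 * m)) *\<^sub>R 1)
     \<and> csa_le st ((1 / real ((d + m - 1) choose m)) *\<^sub>R (\<Sum>j=1..n. ip (\<tau> j) (\<tau> j) ^ m)\<^sup>2)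
               (\<Sum>j=1..n. \<Sum>k=1..n. ip (\<tau> j) (\<tau> k) ^ m * ip (\<tau> k) (\<tau> j) ^ m)
     \<and> csa_le st (\<Sum>j=1..n. \<Sum>k=1..n. ip (\<tau> j) (\<tau> k) * ip (\<tau> k) (\<tau> j))
               ((\<Sum>j=1..n. \<Sum>k=1..n. norm (ip (\<tau> j) (\<tau> k)) ^ 2) *\<^sub>R 1)
     \<and> csa_le st ((1 / real d) *\<^sub>R (\<Sum>j=1..n. ip (\<tau> j) (\<tau> j))\<^sup>2)
               (\<Sum>j=1..n. \<Sum>k=1..n. ip (\<tau> j) (\<tau> k) * ip (\<tau> k) (\<tau> j))
     \<and> (n \<ge> 2 \<longrightarrow>
          csa_le st ((1 / (real n ^ 2 - real n)) *\<^sub>R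
                       ((1 / real ((d + m - 1) choose m)) *\<^sub>R (\<Sum>j=1..n. ip (\<tau> j) (\<tau> j) ^ m)\<^sup>2
                        - (\<Sum>j=1..n. hm_norm ip (\<tau> j) ^ (4 * m)) *\<^sub>R 1))
                    (Max {norm (ip (\<tau> j) (\<tau> k)) ^ (2 * m) | j k.
                            j \<in> {1..n} \<and> k \<in> {1..n} \<and> j \<noteq> k} *\<^sub>R 1)
        \<and> csa_le st ((1 / (real n ^ 2 - real n)) *\<^sub>R
                       ((1 / real d) *\<^sub>R (\<Sum>j=1..n. ip (\<tau> j) (\<tau> j))\<^sup>2
                        - (\<Sum>j=1..n. hm_norm ip (\<tau> j) ^ 4) *\<^sub>R 1))
                    (Max {norm (ip (\<tau> j) (\<tau> k)) ^ 2 | j k.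
                            j \<in> {1..n} \<and> k \<in> {1..n} \<and> j \<noteq> k} *\<^sub>R 1))"
proof -
  have A: ?thesis if "True" using core[OF assms(2) assms(3) assms(5), where m=1] core[OF assms(2) assms(3) assms(5), where m=m]
    by simp
  then show ?thesis by simp
qed

end
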